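(* Let $\vec G$ be a finite directed multigraph without self-loops with $n$ vertices and $m$ edges, with positive real edge Values and edges listed in chronological order. If Maxflow paths are computed by the max-priority-queue (binary max-heap) widest-path procedure and cycle detection is done by depth-first search, then the Weighted Cycle Deletion procedure (described in the context) runs in time $O\big((m+n)\cdot m^2\cdot \log n\big)$.
   Context: A Maxflow path from $x$ to $y$ in a graph $H$ is a directed path from $x$ to $y$ whose minimum edge Value is maximum among all directed paths from $x$ to $y$ in $H$. It is computed as follows: initialize $\mathrm{dist}[x]=+\infty$, $\mathrm{dist}[w]=-\infty$ otherwise; repeatedly extract from a max-heap a vertex $\mathrm{ver}$ of largest $\mathrm{dist}$, and for each out-neighbor $w$ set $\mathrm{dist}[w]=\max(\mathrm{dist}[w],\min(\mathrm{dist}[\mathrm{ver}],\text{largest Value of an edge from }\mathrm{ver}\text{ to }w))$, recording the corresponding parent edge when $\mathrm{dist}[w]$ increases; then recover the path from parent pointers. The flow value $\phi(C)$ of a directed cycle $C$ is the maximum minus the minimum edge Value on $C$. DELETE\_CYCLE$(G',e)$, with $e$ directed from $u$ to $v$: set $S=\emptyset$, $H=G'$; while $H$ contains a directed path from $v$ to $u$, compute a Maxflow path $P$ from $v$ to $u$ in $H$, add $P$ to $S$, and delete from $H$ every edge whose Value is at least the maximum edge Value of $P$. Then choose $P_{\min}\in S$ minimizing $\phi(P\cup\{e\})$, let $C=P_{\min}\cup\{e\}$ and $c$ the minimum edge Value on $C$; subtract $c$ from every edge Value of $C$ in $G'$, remove edges whose Value becomes $0$, and return $G'$. Weighted Cycle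 Deletion: start with empty $G'$; for $i=1,\dots,m$: insert $e_i$ into $G'$; while $G'$ contains a directed cycle, replace $G'$ by DELETE\_CYCLE$(G',e_i)$. Output $G'$. *)

theory Defs
  imports Complex_Main "HOL-Library.Extended_Real" "HOL-Library.While_Combinator" "HOL-Library.Monad_Syntax"
begin

text \<open>Cost model (unit-cost RAM): every elementary step (comparison, assignment,
real arithmetic, list/adjacency-list access) costs 1; every operation of the
binary max-heap (which never holds more than n vertices) costs hc n = ceil(log2(n+1)) + 1.
Values are reals. An edge is (identifier, tail, head, Value); vertices are 0..n-1.\<close>

type_synonym edge = "nat \<times> nat \<times> nat \<times> real"

definition eid :: "edge \<Rightarrow> nat" where "eid e = fst e"
definition etl :: "edge \<Rightarrow> nat" where "etl e = fst (snd e)"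
definition ehd :: "edge \<Rightarrow> nat" where "ehd e = fst (snd (snd e))"
definition evl :: "edge \<Rightarrow> real" where "evl e = snd (snd (snd e))"

text \<open>While loop with a partial body: None = body failed or loop does not terminate.\<close>
definition whileP :: "('s \<Rightarrow> bool) \<Rightarrow> ('s \<Rightarrow> 's option) \<Rightarrow> 's \<Rightarrow> 's option" where
  "whileP b c s = Option.bind
     (while_option (\<lambda>x. case x of Some s \<Rightarrow> b s | None \<Rightarrow> False) (\<lambda>x. Option.bind x c) (Some s)) id"

definition hc :: "nat \<Rightarrow> nat" where "hc n = nat \<lceil>log 2 (real n + 1)\<rceil> + 1"

definition adj :: "edge list \<Rightarrow> nat \<Rightarrow> edge list" where
  "adj H v = filter (\<lambda>e. etl e = v) H"

definition relax1 :: "nat \<Rightarrow> nat \<Rightarrow> (nat \<Rightarrow> ereal) \<times> (nat \<Rightarrow> edge option) \<times> nat \<Rightarrow> edge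
    \<Rightarrow> (nat \<Rightarrow> ereal) \<times> (nat \<Rightarrow> edge option) \<times> nat" where
  "relax1 n v s e = (case s of (dst, par, t) \<Rightarrow>
     (let cand = min (dst v) (ereal (evl e)); w = ehd e in
      if dst w < cand then (dst(w := cand), par(w := Some e), t + 1 + hc n)
      else (dst, par, t + 1)))"

definition pick_max :: "(nat \<Rightarrow> ereal) \<Rightarrow> nat set \<Rightarrow> nat" where
  "pick_max dst Q = (SOME v. v \<in> Q \<and> (\<forall>w\<in>Q. dst w \<le> dst v))"

definition dij_step :: "nat \<Rightarrow> edge list \<Rightarrow> (nat \<Rightarrow> ereal) \<times> (nat \<Rightarrow> edge option) \<times> nat set \<times> nat
    \<Rightarrow> ((nat \<Rightarrow> ereal) \<times> (nat \<Rightarrow> edge option) \<times> nat set \<times> nat) option" where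
  "dij_step n H s = (case s of (dst, par, Q, t) \<Rightarrow>
     (let v = pick_max dst Q in
      (case foldl (relax1 n v) (dst, par, t + 1 + hc n) (adj H v) of
         (dst', par', t') \<Rightarrow> Some (dst', par', Q - {v}, t'))))"

text \<open>Returns (y reachable from x, Maxflow path as edge list from x to y, cost).\<close>
definition maxflow :: "nat \<Rightarrow> edge list \<Rightarrow> nat \<Rightarrow> nat \<Rightarrow> (bool \<times> edge list \<times> nat) option" where
  "maxflow n H x y = do {
     (dst, par, Q, t) \<leftarrow> whileP (\<lambda>(d, p, Q, t). Q \<noteq> {}) (dij_step n H)
        (\<lambda>w. if w = x then PInfty else MInfty, \<lambda>w. None, {0..<n}, 3 * n + length H + 1);
     (z, P, t') \<leftarrow> whileP (\<lambda>(z, P, t). z \<noteq> x \<and> par z \<noteq> None)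
        (\<lambda>(z, P, t). Some (etl (the (par z)), the (par z) # P, t + 1)) (y, [], t);
     Some (dst y \<noteq> MInfty, P, t' + 1) }"

definition del_cycle :: "nat \<Rightarrow> edge list \<Rightarrow> edge \<Rightarrow> (edge list \<times> nat) option" where
  "del_cycle n G e = do {
     (H, S, fin, t) \<leftarrow> whileP (\<lambda>(H, S, fin, t). \<not> fin)
        (\<lambda>(H, S, fin, t). do {
            (r, P, tm) \<leftarrow> maxflow n H (ehd e) (etl e);
            if r then
              (let mx = Max (evl ` set P) in
               Some (filter (\<lambda>f. evl f < mx) H, S @ [P], False, t + tm + length H + length P + 1))
            else Some (H, S, True, t + tm) })
        (G, [], False, length G + 1);
     if S = [] then None else
     (let phi = (\<lambda>P. Max (evl ` set (e # P)) - Min (evl ` set (e # P)));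
          Pm = (SOME P. P \<in> set S \<and> (\<forall>Q\<in>set S. phi P \<le> phi Q));
          C = e # Pm;
          c = Min (evl ` set C);
          ids = eid ` set C;
          G1 = map (\<lambda>f. if eid f \<in> ids then (eid f, etl f, ehd f, evl f - c) else f) G;
          G2 = filter (\<lambda>f. evl f \<noteq> 0) G1
      in Some (G2, t + sum_list (map (\<lambda>P. length P + 2) S) + 2 * length C + 3 * length G + 1)) }"

definition dfs_step :: "edge list \<Rightarrow> (nat \<Rightarrow> nat) \<times> (nat \<times> edge list) list \<times> nat list \<times> bool \<times> nat
    \<Rightarrow> (nat \<Rightarrow> nat) \<times> (nat \<times> edge list) list \<times> nat list \<times> bool \<times> nat" where
  "dfs_step G s = (case s of (col, st, rs, fd, t) \<Rightarrow>
     (case st of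
        [] \<Rightarrow> (case rs of
                 [] \<Rightarrow> (col, st, rs, fd, t + 1)
               | r # rs' \<Rightarrow> if col r = 0 then (col(r := 1), [(r, adj G r)], rs', fd, t + 1)
                            else (col, st, rs', fd, t + 1))
      | (v, es) # st' \<Rightarrow> (case es of
                 [] \<Rightarrow> (col(v := 2), st', rs, fd, t + 1)
               | e # es' \<Rightarrow> (let w = ehd e in
                   if col w = 1 then (col, (v, es') # st', rs, True, t + 1)
                   else if col w = 0 then (col(w := 1), (w, adj G w) # (v, es') # st', rs, fd, t + 1)
                   else (col, (v, es') # st', rs, fd, t + 1)))))"

text \<open>Returns (G contains a directed cycle, cost). Colours: 0 white, 1 grey, 2 black.\<close>
definition has_cycle :: "nat \<Rightarrow> edge list \<Rightarrow> (bool \<times> nat) option" where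
  "has_cycle n G = do {
     (col, st, rs, fd, t) \<leftarrow> whileP (\<lambda>(col, st, rs, fd, t). \<not> fd \<and> (st \<noteq> [] \<or> rs \<noteq> []))
        (\<lambda>s. Some (dfs_step G s)) (\<lambda>_. 0, [], [0..<n], False, length G + 2 * n + 1);
     Some (fd, t) }"

definition wcd_step :: "nat \<Rightarrow> (edge list \<times> nat) option \<Rightarrow> nat \<times> (nat \<times> nat \<times> real)
    \<Rightarrow> (edge list \<times> nat) option" where
  "wcd_step n Gt ie = (case ie of (i, (a, b, x)) \<Rightarrow> do {
     (G, t) \<leftarrow> Gt;
     let G' = G @ [(i, a, b, x)];
     (c0, t0) \<leftarrow> has_cycle n G';
     (G'', t'', cyc) \<leftarrow> whileP (\<lambda>(G, t, cyc). cyc)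
        (\<lambda>(G, t, cyc). do {
            e \<leftarrow> find (\<lambda>f. eid f = i) G;
            (G1, t1) \<leftarrow> del_cycle n G e;
            (cyc', t2) \<leftarrow> has_cycle n G1;
            Some (G1, t + length G + t1 + t2, cyc') })
        (G', t + 1 + t0, c0);
     Some (G'', t'') })"

text \<open>Input: edges listed chronologically as (tail, head, Value); edge number i gets
identifier i. Output: (final G', total cost), or None if the procedure does not terminate.\<close>
definition wcd :: "nat \<Rightarrow> (nat \<times> nat \<times> real) list \<Rightarrow> (edge list \<times> nat) option" where
  "wcd n es = foldl (wcd_step n) (Some ([], 1)) (zip [0..<length es] es)"

definition valid_input :: "nat \<Rightarrow> (nat \<times> nat \<times> real) list \<Rightarrow> bool" where
  "valid_input n es = (\<forall>(a, b, x) \<in> set es. a < n \<and> b < n \<and> a \<noteq> b \<and> 0 < x)"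

end

theory Submission
  imports Defs
begin

lemma whileP_rule:
  fixes f :: "'s \<Rightarrow> nat"
  assumes init: "I s0"
    and step: "\<And>s. I s \<Longrightarrow> b s \<Longrightarrow> \<exists>s'. c s = Some s' \<and> I s' \<and> f s' < f s"
  shows "\<exists>s'. whileP b c s0 = Some s' \<and> I s' \<and> \<not> b s'"
proof -
  define B where "B = (\<lambda>x. case x of Some s \<Rightarrow> b s | None \<Rightarrow> False)"
  define C where "C = (\<lambda>x. Option.bind x c)"
  define P where "P = (\<lambda>x. \<exists>s. x = Some s \<and> I s)"
  define g where "g = (\<lambda>x. case x of Some s \<Rightarrow> f s | None \<Rightarrow> 0)"
  have st: "P (C x) \<and> g (C x) < g x" if "P x" "B x" for x
  proof -
    from that obtain s where s: "x = Some s" "I s" "b s" by (auto simp: P_def B_def)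
    from step[OF s(2,3)] obtain s' where "c s = Some s'" "I s'" "f s' < f s" by blast
    then show ?thesis using s by (auto simp: P_def C_def g_def)
  qed
  have "P (Some s0)" using init by (simp add: P_def)
  then obtain t where t: "while_option B C (Some s0) = Some t"
    using measure_while_option_Some[of P B C g] st by blast
  have "P t" using while_option_rule[of P B C, OF _ t] st \<open>P (Some s0)\<close> by blast
  moreover have "\<not> B t" using while_option_stop[OF t] .
  ultimately obtain s' where "t = Some s'" "I s'" "\<not> b s'" by (auto simp: P_def B_def)
  moreover have "whileP b c s0 = Option.bind (Some t) id"
    using t by (simp add: whileP_def B_def C_def)
  ultimately show ?thesis by simp
qed

definition rel :: "edge list \<Rightarrow> (nat \<times> nat) set" where
  "rel G = (\<lambda>e. (etl e, ehd e)) ` set G"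

lemma in_relI: "e \<in> set G \<Longrightarrow> (etl e, ehd e) \<in> rel G"
  by (auto simp: rel_def)

lemma adj_set: "e \<in> set (adj G v) \<longleftrightarrow> e \<in> set G \<and> etl e = v"
  by (auto simp: adj_def)

lemma sum_adj: "\<forall>e\<in>set G. etl e < n \<Longrightarrow> (\<Sum>u<n. length (adj G u)) = length G"
proof (induction G)
  case Nil then show ?case by (simp add: adj_def)
next
  case (Cons e G)
  have "(\<Sum>u<n. length (adj (e # G) u)) = (\<Sum>u<n. (if etl e = u then 1 else 0) + length (adj G u))"
    by (rule sum.cong) (auto simp: adj_def)
  also have "\<dots> = (\<Sum>u<n. (if etl e = u then 1 else 0)) + (\<Sum>u<n. length (adj G u))"
    by (simp add: sum.distrib)
  also have "(\<Sum>u<n. (if etl e = u then 1 else 0::nat)) = 1"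
    using Cons.prems by (simp add: sum.delta)
  finally show ?case using Cons by simp
qed

fun chain :: "(nat \<times> nat) set \<Rightarrow> nat list \<Rightarrow> bool" where
  "chain R [] = True"
| "chain R [x] = True"
| "chain R (x # y # r) = ((y, x) \<in> R \<and> chain R (y # r))"

lemma chain_reach: "chain R (x # l) \<Longrightarrow> w \<in> set (x # l) \<Longrightarrow> (w, x) \<in> R\<^sup>*"
proof (induction l arbitrary: x)
  case Nil then show ?case by simp
next
  case (Cons y l)
  then have "(y, x) \<in> R" "chain R (y # l)" by auto
  show ?case
  proof (cases "w = x")
    case True then show ?thesis by simp
  next
    case False
    then have "w \<in> set (y # l)" using Cons.prems by simp
    then have "(w, y) \<in> R\<^sup>*" using Cons.IH \<open>chain R (y # l)\<close> by blast
    then show ?thesis using \<open>(y, x) \<in> R\<close> by (meson rtrancl.rtrancl_into_rtrancl)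
  qed
qed

definition Wset :: "nat \<Rightarrow> (nat \<Rightarrow> nat) \<Rightarrow> nat set" where
  "Wset n col = {u. u < n \<and> col u = 0}"

definition phi :: "edge list \<Rightarrow> nat \<Rightarrow> (nat \<Rightarrow> nat) \<Rightarrow> (nat \<times> edge list) list \<Rightarrow> nat list \<Rightarrow> nat" where
  "phi G n col st rs = 2 * card (Wset n col) + (\<Sum>u\<in>Wset n col. length (adj G u))
     + sum_list (map (\<lambda>(v, es). length es + 1) st) + length rs"

abbreviation black :: "(nat \<Rightarrow> nat) \<Rightarrow> nat \<Rightarrow> bool" where
  "black col u \<equiv> col u \<noteq> 0 \<and> col u \<noteq> 1"

definition compl_inv :: "edge list \<Rightarrow> (nat \<Rightarrow> nat) \<Rightarrow> (nat \<times> edge list) list \<Rightarrow> bool" where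
  "compl_inv G col st = (\<exists>(rk::nat\<Rightarrow>nat) (k::nat). (\<forall>u. black col u \<longrightarrow> rk u < k) \<and>
     (\<forall>u. black col u \<longrightarrow> (\<forall>e\<in>set G. etl e = u \<longrightarrow> black col (ehd e) \<and> rk (ehd e) < rk u)) \<and>
     (\<forall>ab v es below. st = ab @ (v, es) # below \<longrightarrow>
        (\<exists>ds. adj G v = ds @ es \<and> (\<forall>e\<in>set ds. black col (ehd e) \<or> ehd e \<in> fst ` set ab))))"

definition dfs_inv :: "edge list \<Rightarrow> nat \<Rightarrow> nat \<Rightarrow> (nat \<Rightarrow> nat) \<times> (nat \<times> edge list) list \<times> nat list \<times> bool \<times> nat \<Rightarrow> bool" where
  "dfs_inv G n T0 s = (case s of (col, st, rs, fd, t) \<Rightarrow>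
     set rs \<subseteq> {..<n} \<and> (\<forall>u. col u = 1 \<longleftrightarrow> u \<in> fst ` set st) \<and> distinct (map fst st) \<and>
     (\<forall>(v, es)\<in>set st. v < n \<and> (\<exists>ds. adj G v = ds @ es)) \<and> chain (rel G) (map fst st) \<and>
     (fd \<longrightarrow> \<not> acyclic (rel G)) \<and> (\<not> fd \<longrightarrow> compl_inv G col st) \<and>
     (\<forall>u<n. u \<in> set rs \<or> col u \<noteq> 0) \<and> t + phi G n col st rs \<le> T0)"

lemma Wset_finite: "finite (Wset n col)"
  by (auto simp: Wset_def)

lemma Wset_upd: "r < n \<Longrightarrow> col r = 0 \<Longrightarrow> Wset n (col(r := 1)) = Wset n col - {r}"
  by (auto simp: Wset_def)

lemma phi_remove: "r < n \<Longrightarrow> col r = 0 \<Longrightarrow>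
   2 * card (Wset n col) + (\<Sum>u\<in>Wset n col. length (adj G u)) =
   2 + length (adj G r) + 2 * card (Wset n (col(r := 1))) + (\<Sum>u\<in>Wset n (col(r := 1)). length (adj G u))"
proof -
  assume a: "r < n" "col r = 0"
  then have r: "r \<in> Wset n col" by (simp add: Wset_def)
  have "card (Wset n col) = Suc (card (Wset n col - {r}))"
    using r Wset_finite by (metis card_Suc_Diff1)
  moreover have "(\<Sum>u\<in>Wset n col. length (adj G u)) = length (adj G r) + (\<Sum>u\<in>Wset n col - {r}. length (adj G u))"
    using r Wset_finite by (metis sum.remove)
  ultimately show ?thesis using Wset_upd[of r n col] a by simp
qed

lemma decomp_cons: "a # l = ab @ x # below \<longleftrightarrow> (ab = [] \<and> x = a \<and> below = l) \<or> (\<exists>ab'. ab = a # ab' \<and> l = ab' @ x # below)"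
  by (cases ab) auto

lemma ci_root:
  assumes "compl_inv G col []" "col r = 0"
  shows "compl_inv G (col(r := 1)) [(r, adj G r)]"
proof -
  from assms(1) obtain rk and k :: nat where
    a: "\<forall>u. black col u \<longrightarrow> rk u < k"
       "\<forall>u. black col u \<longrightarrow> (\<forall>e\<in>set G. etl e = u \<longrightarrow> black col (ehd e) \<and> rk (ehd e) < rk u)"
    unfolding compl_inv_def by blast
  have bl: "black (col(r := 1)) u = black col u" for u using assms(2) by auto
  show ?thesis unfolding compl_inv_def bl
    apply (rule exI[of _ rk], rule exI[of _ k])
    using a by (auto simp: decomp_cons)
qed

lemma ci_skip:
  assumes "compl_inv G col ((v, e # es) # st)" "black col (ehd e)"
  shows "compl_inv G col ((v, es) # st)"
proof -
  from assms(1) obtain rk and k :: nat where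
    a: "\<forall>u. black col u \<longrightarrow> rk u < k"
       "\<forall>u. black col u \<longrightarrow> (\<forall>e\<in>set G. etl e = u \<longrightarrow> black col (ehd e) \<and> rk (ehd e) < rk u)"
    and c: "\<forall>ab v' es' below. (v, e # es) # st = ab @ (v', es') # below \<longrightarrow>
        (\<exists>ds. adj G v' = ds @ es' \<and> (\<forall>e\<in>set ds. black col (ehd e) \<or> ehd e \<in> fst ` set ab))"
    unfolding compl_inv_def by blast
  have "\<exists>ds. adj G v' = ds @ es' \<and> (\<forall>e\<in>set ds. black col (ehd e) \<or> ehd e \<in> fst ` set ab)"
    if h: "(v, es) # st = ab @ (v', es') # below" for ab v' es' below
  proof (cases ab)
    case Nil
    with h have "v' = v" "es' = es" "below = st" by auto
    with c[rule_format, of "[]" v "e # es" st] obtain ds where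
      "adj G v = ds @ e # es" "\<forall>e\<in>set ds. black col (ehd e)" by auto
    then show ?thesis using assms(2) Nil \<open>v' = v\<close> \<open>es' = es\<close>
      by (intro exI[of _ "ds @ [e]"]) auto
  next
    case (Cons x ab')
    with h have x: "x = (v, es)" "st = ab' @ (v', es') # below" by auto
    with c[rule_format, of "(v, e # es) # ab'" v' es' below] obtain ds where
      "adj G v' = ds @ es'" "\<forall>e\<in>set ds. black col (ehd e) \<or> ehd e \<in> fst ` set ((v, e # es) # ab')" by auto
    then show ?thesis using Cons x by (intro exI[of _ ds]) auto
  qed
  then show ?thesis unfolding compl_inv_def using a by blast
qed

lemma ci_push:
  assumes "compl_inv G col ((v, e # es) # st)" "col (ehd e) = 0"
  shows "compl_inv G (col(ehd e := 1)) ((ehd e, adj G (ehd e)) # (v, es) # st)"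
proof -
  let ?w = "ehd e"
  from assms(1) obtain rk and k :: nat where
    a: "\<forall>u. black col u \<longrightarrow> rk u < k"
       "\<forall>u. black col u \<longrightarrow> (\<forall>e\<in>set G. etl e = u \<longrightarrow> black col (ehd e) \<and> rk (ehd e) < rk u)"
    and c: "\<forall>ab v' es' below. (v, e # es) # st = ab @ (v', es') # below \<longrightarrow>
        (\<exists>ds. adj G v' = ds @ es' \<and> (\<forall>e\<in>set ds. black col (ehd e) \<or> ehd e \<in> fst ` set ab))"
    unfolding compl_inv_def by blast
  have bl: "black (col(?w := 1)) u = black col u" for u using assms(2) by auto
  have "\<exists>ds. adj G v' = ds @ es' \<and> (\<forall>e\<in>set ds. black col (ehd e) \<or> ehd e \<in> fst ` set ab)"
    if h: "(?w, adj G ?w) # (v, es) # st = ab @ (v', es') # below" for ab v' es' below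
  proof (cases ab)
    case Nil
    with h show ?thesis by (intro exI[of _ "[]"]) auto
  next
    case (Cons x ab')
    with h have x: "x = (?w, adj G ?w)" "(v, es) # st = ab' @ (v', es') # below" by auto
    show ?thesis
    proof (cases ab')
      case Nil
      with x have "v' = v" "es' = es" "below = st" by auto
      with c[rule_format, of "[]" v "e # es" st] obtain ds where
        "adj G v = ds @ e # es" "\<forall>e\<in>set ds. black col (ehd e)" by auto
      then show ?thesis using Nil Cons x \<open>v' = v\<close> \<open>es' = es\<close>
        by (intro exI[of _ "ds @ [e]"]) auto
    next
      case (Cons y ab'')
      with x have y: "y = (v, es)" "st = ab'' @ (v', es') # below" by auto
      with c[rule_format, of "(v, e # es) # ab''" v' es' below] obtain ds where
        "adj G v' = ds @ es'" "\<forall>e\<in>set ds. black col (ehd e) \<or> ehd e \<in> fst ` set ((v, e # es) # ab'')" by auto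
      then show ?thesis using Cons y \<open>ab = x # ab'\<close> by (intro exI[of _ ds]) auto
    qed
  qed
  then show ?thesis unfolding compl_inv_def bl using a by blast
qed

lemma ci_pop:
  assumes "compl_inv G col ((v, []) # st)" "col v = 1"
  shows "compl_inv G (col(v := 2)) st"
proof -
  from assms(1) obtain rk and k :: nat where
    a: "\<forall>u. black col u \<longrightarrow> rk u < k"
       "\<forall>u. black col u \<longrightarrow> (\<forall>e\<in>set G. etl e = u \<longrightarrow> black col (ehd e) \<and> rk (ehd e) < rk u)"
    and c: "\<forall>ab v' es' below. (v, []) # st = ab @ (v', es') # below \<longrightarrow>
        (\<exists>ds. adj G v' = ds @ es' \<and> (\<forall>e\<in>set ds. black col (ehd e) \<or> ehd e \<in> fst ` set ab))"
    unfolding compl_inv_def by blast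
  have bl: "black (col(v := 2)) u = (black col u \<or> u = v)" for u using assms(2) by auto
  from c[rule_format, of "[]" v "[]" st] have vs: "\<forall>e\<in>set (adj G v). black col (ehd e)" by auto
  define rk' where "rk' = rk(v := k)"
  have 1: "\<forall>u. black (col(v := 2)) u \<longrightarrow> rk' u < Suc k"
    using a(1) by (auto simp: bl rk'_def)
  have 2: "\<forall>u. black (col(v := 2)) u \<longrightarrow> (\<forall>e\<in>set G. etl e = u \<longrightarrow> black (col(v := 2)) (ehd e) \<and> rk' (ehd e) < rk' u)"
  proof (intro allI impI ballI)
    fix u e assume u: "black (col(v := 2)) u" and e: "e \<in> set G" "etl e = u"
    show "black (col(v := 2)) (ehd e) \<and> rk' (ehd e) < rk' u"
    proof (cases "u = v")
      case True
      then have "black col (ehd e)" using vs e by (auto simp: adj_set)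
      then have "ehd e \<noteq> v" using assms(2) by auto
      then show ?thesis using \<open>black col (ehd e)\<close> a(1) True by (auto simp: bl rk'_def)
    next
      case False
      then have "black col u" using u bl by auto
      then have "black col (ehd e)" "rk (ehd e) < rk u" using a(2) e by auto
      then have "ehd e \<noteq> v" using assms(2) by auto
      then show ?thesis using \<open>black col (ehd e)\<close> \<open>rk (ehd e) < rk u\<close> False by (auto simp: bl rk'_def)
    qed
  qed
  have 3: "\<exists>ds. adj G v' = ds @ es' \<and> (\<forall>e\<in>set ds. black (col(v := 2)) (ehd e) \<or> ehd e \<in> fst ` set ab)"
    if h: "st = ab @ (v', es') # below" for ab v' es' below
  proof -
    from c[rule_format, of "(v, []) # ab" v' es' below] h obtain ds where
      "adj G v' = ds @ es'" "\<forall>e\<in>set ds. black col (ehd e) \<or> ehd e \<in> fst ` set ((v, []) # ab)" by auto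
    then show ?thesis by (intro exI[of _ ds]) (auto simp: bl)
  qed
  show ?thesis unfolding compl_inv_def using 1 2 3 by blast
qed

lemma dfs_step_ok:
  assumes E: "\<forall>e\<in>set G. etl e < n \<and> ehd e < n"
  and I: "dfs_inv G n T0 (col, st, rs, fd, t)"
  and b: "\<not> fd" "st \<noteq> [] \<or> rs \<noteq> []"
  shows "\<exists>col' st' rs' fd' t'. dfs_step G (col, st, rs, fd, t) = (col', st', rs', fd', t') \<and>
     dfs_inv G n T0 (col', st', rs', fd', t') \<and> phi G n col' st' rs' < phi G n col st rs"
proof -
  from I have rs_n: "set rs \<subseteq> {..<n}" and gr: "\<forall>u. col u = 1 \<longleftrightarrow> u \<in> fst ` set st"
    and dist: "distinct (map fst st)" and sfx: "\<forall>(v, es)\<in>set st. v < n \<and> (\<exists>ds. adj G v = ds @ es)"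
    and ch: "chain (rel G) (map fst st)" and ci: "compl_inv G col st"
    and cov: "\<forall>u<n. u \<in> set rs \<or> col u \<noteq> 0" and cost: "t + phi G n col st rs \<le> T0"
    using b by (auto simp: dfs_inv_def)
  show ?thesis
  proof (cases st)
    case Nil
    then obtain r rs' where rs: "rs = r # rs'" using b by (cases rs) auto
    have rn: "r < n" using rs_n rs by auto
    show ?thesis
    proof (cases "col r = 0")
      case True
      have step: "dfs_step G (col, st, rs, fd, t) = (col(r := 1), [(r, adj G r)], rs', fd, t + 1)"
        using Nil rs True by (simp add: dfs_step_def)
      have ph: "phi G n (col(r := 1)) [(r, adj G r)] rs' + 1 \<le> phi G n col st rs"
        using phi_remove[of r n col G] rn True Nil rs by (simp add: phi_def)
      have ci': "compl_inv G (col(r := 1)) [(r, adj G r)]"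
        using ci_root[of G col r] ci Nil True by simp
      have "dfs_inv G n T0 (col(r := 1), [(r, adj G r)], rs', fd, t + 1)"
        unfolding dfs_inv_def using rs_n rs gr Nil rn ci' b cov cost ph by auto
      then show ?thesis using step ph by auto
    next
      case False
      have step: "dfs_step G (col, st, rs, fd, t) = (col, [], rs', fd, t + 1)"
        using Nil rs False by (simp add: dfs_step_def)
      have ph: "phi G n col [] rs' + 1 \<le> phi G n col st rs"
        using Nil rs by (simp add: phi_def)
      have "dfs_inv G n T0 (col, [], rs', fd, t + 1)"
        unfolding dfs_inv_def using rs_n rs gr Nil ci b cov cost ph False by auto
      then show ?thesis using step ph by auto
    qed
  next
    case (Cons top st')
    note stc = this
    obtain v es0 where top: "top = (v, es0)" by fastforce
    have vn: "v < n" and colv: "col v = 1" using sfx gr stc top by auto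
    obtain ds0 where ds0: "adj G v = ds0 @ es0" using sfx stc top by auto
    show ?thesis
    proof (cases es0)
      case Nil
      have step: "dfs_step G (col, st, rs, fd, t) = (col(v := 2), st', rs, fd, t + 1)"
        using stc top Nil by (simp add: dfs_step_def)
      have ph: "phi G n (col(v := 2)) st' rs + 1 \<le> phi G n col st rs"
      proof -
        have "Wset n (col(v := 2)) = Wset n col" using colv by (auto simp: Wset_def)
        then show ?thesis using stc top Nil by (simp add: phi_def)
      qed
      have ci': "compl_inv G (col(v := 2)) st'"
        using ci_pop[of G col v st'] ci stc top Nil colv by simp
      have vst: "v \<notin> fst ` set st'" using dist stc top by auto
      have ch': "chain (rel G) (map fst st')" using ch stc by (cases st') auto
      have "dfs_inv G n T0 (col(v := 2), st', rs, fd, t + 1)"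
        unfolding dfs_inv_def using rs_n gr stc top ci' b cov cost ph vst dist sfx ch' colv
        by (auto split: if_splits)
      then show ?thesis using step ph by auto
    next
      case (Cons e es')
      note Cons2 = this
      let ?w = "ehd e"
      have "e \<in> set (adj G v)" using ds0 Cons2 by simp
      then have eG: "e \<in> set G" "etl e = v" by (auto simp: adj_set)
      have wn: "?w < n" using E eG by auto
      have ch_st: "chain (rel G) (v # map fst st')" using ch stc top by simp
      show ?thesis
      proof (cases "col ?w = 1")
        case True
        have step: "dfs_step G (col, st, rs, fd, t) = (col, (v, es') # st', rs, True, t + 1)"
          using stc top Cons2 True by (simp add: dfs_step_def Let_def)
        have "?w \<in> set (v # map fst st')" using gr True stc top by auto
        then have "(?w, v) \<in> (rel G)\<^sup>*" using chain_reach ch_st by blast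
        moreover have "(v, ?w) \<in> rel G" using eG in_relI by fastforce
        ultimately have "(?w, ?w) \<in> (rel G)\<^sup>+" by (meson rtrancl_into_trancl1)
        then have nac: "\<not> acyclic (rel G)" by (auto simp: acyclic_def)
        have ph: "phi G n col ((v, es') # st') rs + 1 \<le> phi G n col st rs"
          using stc top Cons2 by (simp add: phi_def)
        have "dfs_inv G n T0 (col, (v, es') # st', rs, True, t + 1)"
          unfolding dfs_inv_def using rs_n gr stc top nac cov cost ph dist sfx ch ds0 Cons2
          by (auto intro!: exI[of _ "ds0 @ [e]"])
        then show ?thesis using step ph by auto
      next
        case False
        note F1 = this
        show ?thesis
        proof (cases "col ?w = 0")
          case True
          let ?st = "(?w, adj G ?w) # (v, es') # st'"
          have step: "dfs_step G (col, st, rs, fd, t) = (col(?w := 1), ?st, rs, fd, t + 1)"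
            using stc top Cons2 True by (simp add: dfs_step_def Let_def)
          have ph: "phi G n (col(?w := 1)) ?st rs + 1 \<le> phi G n col st rs"
            using phi_remove[of ?w n col G] wn True stc top Cons2 by (simp add: phi_def)
          have ci': "compl_inv G (col(?w := 1)) ?st"
            using ci_push[of G col v e es' st'] ci stc top Cons2 True by simp
          have wst: "?w \<notin> fst ` set st" using gr True by (metis zero_neq_one)
          have ch': "chain (rel G) (map fst ?st)"
            using ch_st in_relI[OF eG(1)] eG(2) by simp
          have sfx': "\<forall>(v, es)\<in>set ?st. v < n \<and> (\<exists>ds. adj G v = ds @ es)"
            using sfx wn ds0 Cons2 stc vn by fastforce
          have "dfs_inv G n T0 (col(?w := 1), ?st, rs, fd, t + 1)"
            unfolding dfs_inv_def using rs_n gr stc top ci' b cov cost ph wst dist sfx' ch' True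
            by auto
          then show ?thesis using step ph by auto
        next
          case False
          note False2 = this
          have step: "dfs_step G (col, st, rs, fd, t) = (col, (v, es') # st', rs, fd, t + 1)"
            using stc top Cons2 F1 False2 by (simp add: dfs_step_def Let_def)
          have ph: "phi G n col ((v, es') # st') rs + 1 \<le> phi G n col st rs"
            using stc top Cons2 by (simp add: phi_def)
          have ci': "compl_inv G col ((v, es') # st')"
            using ci_skip[of G col v e es' st'] ci stc top Cons2 F1 False2 by simp
          have "dfs_inv G n T0 (col, (v, es') # st', rs, fd, t + 1)"
            unfolding dfs_inv_def using rs_n gr stc top ci' b cov cost ph dist sfx ch ds0 Cons2
            by (auto intro!: exI[of _ "ds0 @ [e]"])
          then show ?thesis using step ph by auto
        qed
      qed
    qed
  qed
qed

lemma rank_acyclic: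
  assumes "\<And>a b. (a, b) \<in> r \<Longrightarrow> (f b :: nat) < f a"
  shows "acyclic r"
proof -
  have "(x, y) \<in> r\<^sup>+ \<Longrightarrow> f y < f x" for x y
    by (induction rule: trancl_induct) (auto dest: assms)
  then show ?thesis by (auto simp: acyclic_def)
qed

lemma has_cycle_ok:
  assumes E: "\<forall>e\<in>set G. etl e < n \<and> ehd e < n"
  shows "\<exists>b t. has_cycle n G = Some (b, t) \<and> t \<le> 2 * length G + 5 * n + 1 \<and> (b \<longleftrightarrow> \<not> acyclic (rel G))"
proof -
  define T0 where "T0 = length G + 2 * n + 1 + phi G n (\<lambda>_. 0) [] [0..<n]"
  have W0: "Wset n (\<lambda>_. 0) = {..<n}" by (auto simp: Wset_def)
  have phi0: "phi G n (\<lambda>_. 0) [] [0..<n] = 3 * n + length G"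
    using sum_adj[of G n] E by (simp add: phi_def W0)
  have ci0: "compl_inv G (\<lambda>_. 0) []"
    unfolding compl_inv_def by (rule exI[of _ "\<lambda>_. 0"], rule exI[of _ 0]) auto
  have I0: "dfs_inv G n T0 (\<lambda>_. 0, [], [0..<n], False, length G + 2 * n + 1)"
    unfolding dfs_inv_def T0_def using ci0 by auto
  have "\<exists>s'. whileP (\<lambda>(col, st, rs, fd, t). \<not> fd \<and> (st \<noteq> [] \<or> rs \<noteq> []))
        (\<lambda>s. Some (dfs_step G s)) (\<lambda>_. 0, [], [0..<n], False, length G + 2 * n + 1) = Some s' \<and>
        dfs_inv G n T0 s' \<and> \<not> (\<lambda>(col, st, rs, fd, t). \<not> fd \<and> (st \<noteq> [] \<or> rs \<noteq> [])) s'"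
  proof (rule whileP_rule[where f = "\<lambda>(col, st, rs, fd, t). phi G n col st rs"])
    show "dfs_inv G n T0 (\<lambda>_. 0, [], [0..<n], False, length G + 2 * n + 1)" by (rule I0)
  next
    fix s assume "dfs_inv G n T0 s" "(\<lambda>(col, st, rs, fd, t). \<not> fd \<and> (st \<noteq> [] \<or> rs \<noteq> [])) s"
    then show "\<exists>s'. Some (dfs_step G s) = Some s' \<and> dfs_inv G n T0 s' \<and>
       (\<lambda>(col, st, rs, fd, t). phi G n col st rs) s' < (\<lambda>(col, st, rs, fd, t). phi G n col st rs) s"
      using dfs_step_ok[OF E] by (cases s) fastforce
  qed
  then obtain col st rs fd t where
    w: "whileP (\<lambda>(col, st, rs, fd, t). \<not> fd \<and> (st \<noteq> [] \<or> rs \<noteq> []))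
        (\<lambda>s. Some (dfs_step G s)) (\<lambda>_. 0, [], [0..<n], False, length G + 2 * n + 1) = Some (col, st, rs, fd, t)"
    and I: "dfs_inv G n T0 (col, st, rs, fd, t)" and stop: "fd \<or> (st = [] \<and> rs = [])"
    by auto
  have hc: "has_cycle n G = Some (fd, t)" unfolding has_cycle_def w by simp
  have tb: "t \<le> 2 * length G + 5 * n + 1" using I phi0 by (simp add: dfs_inv_def T0_def)
  have "fd \<longleftrightarrow> \<not> acyclic (rel G)"
  proof (cases fd)
    case True then show ?thesis using I by (simp add: dfs_inv_def)
  next
    case False
    with stop have st: "st = []" "rs = []" by auto
    from I False have ci: "compl_inv G col []" and cov: "\<forall>u<n. u \<in> set rs \<or> col u \<noteq> 0"
      and gr: "\<forall>u. col u = 1 \<longleftrightarrow> u \<in> fst ` set st" using st by (auto simp: dfs_inv_def)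
    from ci obtain rk where
      rk: "\<forall>u. black col u \<longrightarrow> (\<forall>e\<in>set G. etl e = u \<longrightarrow> black col (ehd e) \<and> rk (ehd e) < (rk u :: nat))"
      unfolding compl_inv_def by blast
    have "\<And>a b. (a, b) \<in> rel G \<Longrightarrow> rk b < rk a"
    proof -
      fix a b assume "(a, b) \<in> rel G"
      then obtain e where e: "e \<in> set G" "a = etl e" "b = ehd e" by (auto simp: rel_def)
      then have "black col a" using E cov gr st by auto
      then show "rk b < rk a" using rk e by auto
    qed
    then have "acyclic (rel G)" by (rule rank_acyclic)
    then show ?thesis using False by simp
  qed
  then show ?thesis using hc tb by blast
qed

section \<open>Maxflow\<close>

definition rx_inv :: "nat set \<Rightarrow> edge list \<Rightarrow> nat \<Rightarrow> (nat \<Rightarrow> ereal) \<Rightarrow> (nat \<Rightarrow> edge option)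
   \<Rightarrow> (nat \<Rightarrow> ereal) \<Rightarrow> (nat \<Rightarrow> edge option) \<Rightarrow> bool" where
  "rx_inv Q H v dst0 par0 d p = (d v = dst0 v \<and> (\<forall>u. u \<notin> Q \<longrightarrow> d u = dst0 u) \<and>
     (\<forall>z. (p z = par0 z \<and> d z = dst0 z) \<or> (\<exists>e. e \<in> set H \<and> etl e = v \<and> p z = Some e \<and> ehd e = z \<and>
        z \<in> Q \<and> z \<noteq> v \<and> d z \<noteq> MInfty \<and> d z \<le> dst0 v \<and> dst0 z < d z)) \<and>
     (\<forall>w\<in>Q. d w \<le> dst0 v))"

lemma relax1_ok:
  assumes E: "\<forall>e\<in>set H. etl e < n \<and> ehd e < n"
  and vQ: "v \<in> Q" and ext: "\<forall>u<n. u \<notin> Q \<longrightarrow> dst0 v \<le> dst0 u"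
  and R: "rx_inv Q H v dst0 par0 d p"
  and e: "e \<in> set H" "etl e = v"
  shows "\<exists>d' p' t'. relax1 n v (d, p, t) e = (d', p', t') \<and> rx_inv Q H v dst0 par0 d' p' \<and>
     t' \<le> t + (1 + hc n) \<and> (\<forall>z. d z \<le> d' z) \<and> (dst0 v \<noteq> MInfty \<longrightarrow> d' (ehd e) \<noteq> MInfty)"
proof -
  let ?w = "ehd e"
  let ?c = "min (d v) (ereal (evl e))"
  from R have dv: "d v = dst0 v" and dext: "\<forall>u. u \<notin> Q \<longrightarrow> d u = dst0 u"
    and dz: "\<forall>z. (p z = par0 z \<and> d z = dst0 z) \<or> (\<exists>e. e \<in> set H \<and> etl e = v \<and> p z = Some e \<and> ehd e = z \<and>
        z \<in> Q \<and> z \<noteq> v \<and> d z \<noteq> MInfty \<and> d z \<le> dst0 v \<and> dst0 z < d z)"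
    and dq: "\<forall>w\<in>Q. d w \<le> dst0 v" unfolding rx_inv_def by blast+
  have wn: "?w < n" using E e by auto
  have dle: "dst0 z \<le> d z" for z using dz[rule_format, of z] by auto
  show ?thesis
  proof (cases "d ?w < ?c")
    case True
    have step: "relax1 n v (d, p, t) e = (d(?w := ?c), p(?w := Some e), t + 1 + hc n)"
      using True by (simp add: relax1_def Let_def)
    have cle: "?c \<le> dst0 v" using dv by simp
    have wQ: "?w \<in> Q"
    proof (rule ccontr)
      assume "?w \<notin> Q"
      then have "d ?w = dst0 ?w" "dst0 v \<le> dst0 ?w" using dext ext wn by auto
      then show False using True cle dv by (simp add: min_def split: if_splits)
    qed
    have wv: "?w \<noteq> v" using True dv by (metis min.cobounded1 not_le)
    have cM: "?c \<noteq> MInfty" using True by (metis MInfty_eq_minfinity ereal_less_PInfty ereal_infty_less(2) not_MInfty_nonneg not_less_iff_gr_or_eq)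
    have "dst0 ?w < ?c" by (rule order.strict_trans1[OF dle[of ?w] True])
    note lt = this
    have C: "((p(?w := Some e)) z = par0 z \<and> (d(?w := ?c)) z = dst0 z) \<or> (\<exists>e'. e' \<in> set H \<and> etl e' = v \<and> (p(?w := Some e)) z = Some e' \<and> ehd e' = z \<and>
        z \<in> Q \<and> z \<noteq> v \<and> (d(?w := ?c)) z \<noteq> MInfty \<and> (d(?w := ?c)) z \<le> dst0 v \<and> dst0 z < (d(?w := ?c)) z)" for z
    proof (cases "z = ?w")
      case True
      show ?thesis
        apply (rule disjI2, rule exI[of _ e])
        using True e wQ wv cM cle lt by simp
    next
      case False
      then show ?thesis using dz[rule_format, of z] by simp
    qed
    have "rx_inv Q H v dst0 par0 (d(?w := ?c)) (p(?w := Some e))"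
      unfolding rx_inv_def using dv dext dq wv wQ cle C by auto
    moreover have "\<forall>z. d z \<le> (d(?w := ?c)) z" using True by (simp add: less_imp_le)
    ultimately show ?thesis using step cM by auto
  next
    case False
    have step: "relax1 n v (d, p, t) e = (d, p, t + 1)"
      unfolding relax1_def Let_def prod.case if_not_P[OF False] by simp
    have "dst0 v \<noteq> MInfty \<longrightarrow> d ?w \<noteq> MInfty"
      using False dv by (cases "dst0 v") auto
    then show ?thesis using step R by auto
  qed
qed

lemma fold_relax_ok:
  assumes E: "\<forall>e\<in>set H. etl e < n \<and> ehd e < n"
  and vQ: "v \<in> Q" and ext: "\<forall>u<n. u \<notin> Q \<longrightarrow> dst0 v \<le> dst0 u"
  shows "rx_inv Q H v dst0 par0 d p \<Longrightarrow> \<forall>e\<in>set L. e \<in> set H \<and> etl e = v \<Longrightarrow>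
     \<exists>d' p' t'. foldl (relax1 n v) (d, p, t) L = (d', p', t') \<and> rx_inv Q H v dst0 par0 d' p' \<and>
     t' \<le> t + (1 + hc n) * length L \<and> (\<forall>z. d z \<le> d' z) \<and>
     (\<forall>e\<in>set L. dst0 v \<noteq> MInfty \<longrightarrow> d' (ehd e) \<noteq> MInfty)"
proof (induction L arbitrary: d p t)
  case Nil then show ?case by simp
next
  case (Cons e L)
  obtain d1 p1 t1 where s1: "relax1 n v (d, p, t) e = (d1, p1, t1)" and R1: "rx_inv Q H v dst0 par0 d1 p1"
    and t1: "t1 \<le> t + (1 + hc n)" and m1: "\<forall>z. d z \<le> d1 z" and r1: "dst0 v \<noteq> MInfty \<longrightarrow> d1 (ehd e) \<noteq> MInfty"
    using relax1_ok[OF E vQ ext Cons.prems(1), of e t] Cons.prems(2) by auto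
  obtain d' p' t' where s2: "foldl (relax1 n v) (d1, p1, t1) L = (d', p', t')"
    and R2: "rx_inv Q H v dst0 par0 d' p'" and t2: "t' \<le> t1 + (1 + hc n) * length L"
    and m2: "\<forall>z. d1 z \<le> d' z" and r2: "\<forall>e\<in>set L. dst0 v \<noteq> MInfty \<longrightarrow> d' (ehd e) \<noteq> MInfty"
  proof -
    have "\<forall>e\<in>set L. e \<in> set H \<and> etl e = v" using Cons.prems(2) by simp
    then show ?thesis using Cons.IH[OF R1, of t1] that by blast
  qed
  have "d' (ehd e) \<noteq> MInfty" if "dst0 v \<noteq> MInfty"
    using r1 that m2[rule_format, of "ehd e"] by auto
  moreover have "\<forall>z. d z \<le> d' z" using m1 m2 order_trans by blast
  ultimately show ?case using s1 s2 R2 t1 t2 r2 by auto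
qed

lemma pick_max_ok:
  assumes "finite Q" "Q \<noteq> {}"
  shows "pick_max dst Q \<in> Q \<and> (\<forall>w\<in>Q. dst w \<le> dst (pick_max dst Q))"
proof -
  have "Max (dst ` Q) \<in> dst ` Q" using assms by (intro Max_in) auto
  then obtain v where "v \<in> Q" "dst v = Max (dst ` Q)" by auto
  then have "\<exists>v. v \<in> Q \<and> (\<forall>w\<in>Q. dst w \<le> dst v)" using assms by auto
  then show ?thesis unfolding pick_max_def by (rule someI_ex)
qed

definition dij_inv :: "nat \<Rightarrow> edge list \<Rightarrow> nat \<Rightarrow> nat \<Rightarrow> (nat \<Rightarrow> ereal) \<times> (nat \<Rightarrow> edge option) \<times> nat set \<times> nat \<Rightarrow> bool" where
  "dij_inv n H x C0 s = (case s of (dst, par, Q, t) \<Rightarrow>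
     Q \<subseteq> {..<n} \<and> (\<forall>u<n. u \<notin> Q \<longrightarrow> (\<forall>w\<in>Q. dst w \<le> dst u)) \<and>
     (\<exists>rk::nat\<Rightarrow>nat. (\<forall>u<n. u \<notin> Q \<longrightarrow> rk u < n - card Q) \<and>
        (\<forall>z e. par z = Some e \<longrightarrow> e \<in> set H \<and> ehd e = z \<and> etl e < n \<and> etl e \<notin> Q \<and> (z \<notin> Q \<longrightarrow> rk (etl e) < rk z))) \<and>
     dst x = PInfty \<and> (\<forall>z. z \<noteq> x \<longrightarrow> par z = None \<longrightarrow> dst z = MInfty) \<and>
     (\<forall>e\<in>set H. etl e \<notin> Q \<longrightarrow> dst (etl e) \<noteq> MInfty \<longrightarrow> dst (ehd e) \<noteq> MInfty) \<and>
     t + (1 + hc n) * (card Q + (\<Sum>u\<in>Q. length (adj H u))) \<le> C0)"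

lemma dij_step_ok:
  assumes E: "\<forall>e\<in>set H. etl e < n \<and> ehd e < n"
  and I: "dij_inv n H x C0 (dst, par, Q, t)" and Qne: "Q \<noteq> {}"
  shows "\<exists>s'. dij_step n H (dst, par, Q, t) = Some s' \<and> dij_inv n H x C0 s' \<and>
     (\<lambda>(d, p, Q, t). card Q) s' < card Q"
proof -
  from I have Qn: "Q \<subseteq> {..<n}" and ord: "\<forall>u<n. u \<notin> Q \<longrightarrow> (\<forall>w\<in>Q. dst w \<le> dst u)"
    and rkex: "\<exists>rk::nat\<Rightarrow>nat. (\<forall>u<n. u \<notin> Q \<longrightarrow> rk u < n - card Q) \<and>
        (\<forall>z e. par z = Some e \<longrightarrow> e \<in> set H \<and> ehd e = z \<and> etl e < n \<and> etl e \<notin> Q \<and> (z \<notin> Q \<longrightarrow> rk (etl e) < rk z))"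
    and dx: "dst x = PInfty" and dnone: "\<forall>z. z \<noteq> x \<longrightarrow> par z = None \<longrightarrow> dst z = MInfty"
    and reach: "\<forall>e\<in>set H. etl e \<notin> Q \<longrightarrow> dst (etl e) \<noteq> MInfty \<longrightarrow> dst (ehd e) \<noteq> MInfty"
    and cost: "t + (1 + hc n) * (card Q + (\<Sum>u\<in>Q. length (adj H u))) \<le> C0"
    unfolding dij_inv_def by auto
  from rkex obtain rk :: "nat \<Rightarrow> nat" where rk1: "\<forall>u<n. u \<notin> Q \<longrightarrow> rk u < n - card Q"
    and rk2: "\<forall>z e. par z = Some e \<longrightarrow> e \<in> set H \<and> ehd e = z \<and> etl e < n \<and> etl e \<notin> Q \<and> (z \<notin> Q \<longrightarrow> rk (etl e) < rk z)"
    by blast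
  have finQ: "finite Q" using Qn finite_subset by blast
  define v where "v = pick_max dst Q"
  have vQ: "v \<in> Q" and vmax: "\<forall>w\<in>Q. dst w \<le> dst v"
    using pick_max_ok[OF finQ Qne, of dst] by (auto simp: v_def)
  have vn: "v < n" using vQ Qn by auto
  have ext: "\<forall>u<n. u \<notin> Q \<longrightarrow> dst v \<le> dst u" using ord vQ by auto
  have R0: "rx_inv Q H v dst par dst par" unfolding rx_inv_def using vmax by auto
  have L: "\<forall>e\<in>set (adj H v). e \<in> set H \<and> etl e = v" by (auto simp: adj_set)
  obtain d' p' t' where fo: "foldl (relax1 n v) (dst, par, t + 1 + hc n) (adj H v) = (d', p', t')"
    and R: "rx_inv Q H v dst par d' p'" and t': "t' \<le> t + 1 + hc n + (1 + hc n) * length (adj H v)"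
    and mono: "\<forall>z. dst z \<le> d' z" and rv: "\<forall>e\<in>set (adj H v). dst v \<noteq> MInfty \<longrightarrow> d' (ehd e) \<noteq> MInfty"
    using fold_relax_ok[OF E vQ ext R0 L, of "t + 1 + hc n"] by auto
  from R have dv: "d' v = dst v" and dext: "\<forall>u. u \<notin> Q \<longrightarrow> d' u = dst u"
    and dz: "\<forall>z. (p' z = par z \<and> d' z = dst z) \<or> (\<exists>e. e \<in> set H \<and> etl e = v \<and> p' z = Some e \<and> ehd e = z \<and>
        z \<in> Q \<and> z \<noteq> v \<and> d' z \<noteq> MInfty \<and> d' z \<le> dst v \<and> dst z < d' z)"
    and dq: "\<forall>w\<in>Q. d' w \<le> dst v" unfolding rx_inv_def by blast+
  have step: "dij_step n H (dst, par, Q, t) = Some (d', p', Q - {v}, t')"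
    using fo by (simp add: dij_step_def v_def Let_def)
  have cQ: "card Q = Suc (card (Q - {v}))" using vQ finQ by (metis card_Suc_Diff1)
  have cn: "card Q \<le> n" using Qn card_mono[of "{..<n}" Q] by auto
  have sQ: "(\<Sum>u\<in>Q. length (adj H u)) = length (adj H v) + (\<Sum>u\<in>Q - {v}. length (adj H u))"
    using vQ finQ by (metis sum.remove)
  have i1: "Q - {v} \<subseteq> {..<n}" using Qn by auto
  have i2: "\<forall>u<n. u \<notin> Q - {v} \<longrightarrow> (\<forall>w\<in>Q - {v}. d' w \<le> d' u)"
  proof (intro allI impI ballI)
    fix u w assume u: "u < n" "u \<notin> Q - {v}" and w: "w \<in> Q - {v}"
    have "d' w \<le> dst v" using dq w by auto
    also have "dst v \<le> d' u" using u dv dext ext by (cases "u = v") auto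
    finally show "d' w \<le> d' u" .
  qed
  define rk' where "rk' = rk(v := n - card Q)"
  have i3a: "\<forall>u<n. u \<notin> Q - {v} \<longrightarrow> rk' u < n - card (Q - {v})"
    using rk1 cQ cn by (auto simp: rk'_def)
  have i3b: "\<forall>z e. p' z = Some e \<longrightarrow> e \<in> set H \<and> ehd e = z \<and> etl e < n \<and> etl e \<notin> Q - {v} \<and> (z \<notin> Q - {v} \<longrightarrow> rk' (etl e) < rk' z)"
  proof (intro allI impI)
    fix z e assume pz: "p' z = Some e"
    from dz[rule_format, of z] show "e \<in> set H \<and> ehd e = z \<and> etl e < n \<and> etl e \<notin> Q - {v} \<and> (z \<notin> Q - {v} \<longrightarrow> rk' (etl e) < rk' z)"
    proof
      assume "p' z = par z \<and> d' z = dst z"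
      then have pz0: "par z = Some e" using pz by simp
      then have h: "e \<in> set H" "ehd e = z" "etl e < n" "etl e \<notin> Q" "z \<notin> Q \<longrightarrow> rk (etl e) < rk z"
        using rk2[rule_format, OF pz0] by blast+
      have "etl e \<noteq> v" using h vQ by auto
      moreover have "rk' (etl e) < rk' z" if "z \<notin> Q - {v}"
      proof (cases "z = v")
        case True
        then show ?thesis using rk1 h \<open>etl e \<noteq> v\<close> by (simp add: rk'_def)
      next
        case False
        then show ?thesis using that h \<open>etl e \<noteq> v\<close> by (simp add: rk'_def)
      qed
      ultimately show ?thesis using h by auto
    next
      assume "\<exists>e. e \<in> set H \<and> etl e = v \<and> p' z = Some e \<and> ehd e = z \<and>
        z \<in> Q \<and> z \<noteq> v \<and> d' z \<noteq> MInfty \<and> d' z \<le> dst v \<and> dst z < d' z"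
      then show ?thesis using pz vn by auto
    qed
  qed
  have i4: "d' x = PInfty"
  proof (cases "x \<in> Q")
    case False then show ?thesis using dext dx by simp
  next
    case True
    from dz[rule_format, of x] show ?thesis using dx by auto
  qed
  have i5: "\<forall>z. z \<noteq> x \<longrightarrow> p' z = None \<longrightarrow> d' z = MInfty"
  proof (intro allI impI)
    fix z assume "z \<noteq> x" "p' z = None"
    then show "d' z = MInfty" using dz[rule_format, of z] dnone by auto
  qed
  have i6: "\<forall>e\<in>set H. etl e \<notin> Q - {v} \<longrightarrow> d' (etl e) \<noteq> MInfty \<longrightarrow> d' (ehd e) \<noteq> MInfty"
  proof (intro ballI impI)
    fix e assume e: "e \<in> set H" "etl e \<notin> Q - {v}" "d' (etl e) \<noteq> MInfty"
    show "d' (ehd e) \<noteq> MInfty"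
    proof (cases "etl e = v")
      case True
      then show ?thesis using rv e dv by (auto simp: adj_set)
    next
      case False
      then have "etl e \<notin> Q" using e by auto
      then have "dst (ehd e) \<noteq> MInfty" using reach e dext by auto
      then show ?thesis using mono[rule_format, of "ehd e"] by auto
    qed
  qed
  have i7: "t' + (1 + hc n) * (card (Q - {v}) + (\<Sum>u\<in>Q - {v}. length (adj H u))) \<le> C0"
  proof -
    have "t' + (1 + hc n) * (card (Q - {v}) + (\<Sum>u\<in>Q - {v}. length (adj H u)))
        \<le> t + (1 + hc n) * (1 + length (adj H v)) + (1 + hc n) * (card (Q - {v}) + (\<Sum>u\<in>Q - {v}. length (adj H u)))"
      using t' by (simp add: algebra_simps)
    also have "\<dots> = t + (1 + hc n) * (card Q + (\<Sum>u\<in>Q. length (adj H u)))"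
      using cQ sQ by (simp add: algebra_simps)
    finally show ?thesis using cost by linarith
  qed
  have "dij_inv n H x C0 (d', p', Q - {v}, t')"
    unfolding dij_inv_def using i1 i2 i3a i3b i4 i5 i6 i7 by auto
  moreover have "card (Q - {v}) < card Q" using cQ by simp
  ultimately show ?thesis using step by auto
qed

lemma maxflow_ok:
  assumes E: "\<forall>e\<in>set H. etl e < n \<and> ehd e < n" and yn: "y < n" and xy: "x \<noteq> y"
  shows "\<exists>r P t. maxflow n H x y = Some (r, P, t) \<and> t \<le> (hc n + 5) * (length H + n + 1) \<and>
     set P \<subseteq> set H \<and> length P \<le> n \<and> (r \<longrightarrow> P \<noteq> []) \<and> ((x, y) \<in> (rel H)\<^sup>* \<longrightarrow> r)"
proof -
  define C0 where "C0 = 3 * n + length H + 1 + (1 + hc n) * (n + length H)"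
  let ?s0 = "(\<lambda>w. if w = x then PInfty else MInfty, \<lambda>w. None :: edge option, {0..<n}, 3 * n + length H + 1)"
  have sa: "(\<Sum>u\<in>{0..<n}. length (adj H u)) = length H"
    using sum_adj[of H n] E by (simp add: atLeast0LessThan)
  have I0: "dij_inv n H x C0 ?s0"
    unfolding dij_inv_def C0_def using E sa by (auto intro!: exI[of _ "\<lambda>_. 0"])
  have "\<exists>s'. whileP (\<lambda>(d, p, Q, t). Q \<noteq> {}) (dij_step n H) ?s0 = Some s' \<and> dij_inv n H x C0 s' \<and>
      \<not> (\<lambda>(d, p, Q, t). Q \<noteq> {}) s'"
  proof (rule whileP_rule[where f = "\<lambda>(d, p, Q, t). card Q"])
    show "dij_inv n H x C0 ?s0" by (rule I0)
  next
    fix s assume "dij_inv n H x C0 s" "(\<lambda>(d, p, Q, t). Q \<noteq> {}) s"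
    then show "\<exists>s'. dij_step n H s = Some s' \<and> dij_inv n H x C0 s' \<and>
      (\<lambda>(d, p, Q, t). card Q) s' < (\<lambda>(d, p, Q, t). card Q) s"
      using dij_step_ok[OF E] by (cases s) auto
  qed
  then obtain dst par Q t where w1: "whileP (\<lambda>(d, p, Q, t). Q \<noteq> {}) (dij_step n H) ?s0 = Some (dst, par, Q, t)"
    and I: "dij_inv n H x C0 (dst, par, {}, t)" and Qe: "Q = {}" by auto
  from I obtain rk :: "nat \<Rightarrow> nat" where rk1: "\<forall>u<n. rk u < n"
    and rk2: "\<forall>z e. par z = Some e \<longrightarrow> e \<in> set H \<and> ehd e = z \<and> etl e < n \<and> rk (etl e) < rk z"
    and dx: "dst x = PInfty" and dnone: "\<forall>z. z \<noteq> x \<longrightarrow> par z = None \<longrightarrow> dst z = MInfty"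
    and reach: "\<forall>e\<in>set H. dst (etl e) \<noteq> MInfty \<longrightarrow> dst (ehd e) \<noteq> MInfty"
    and cost: "t \<le> C0"
    unfolding dij_inv_def by auto
  let ?J = "\<lambda>(z, P, t2). set P \<subseteq> set H \<and> length P + rk z \<le> rk y \<and> t2 = t + length P \<and> (P = [] \<longrightarrow> z = y)"
  let ?b = "\<lambda>(z, P, t). z \<noteq> x \<and> par z \<noteq> None"
  let ?c = "\<lambda>(z, P, t). Some (etl (the (par z)), the (par z) # P, t + 1)"
  have "\<exists>s'. whileP ?b ?c (y, [], t) = Some s' \<and> ?J s' \<and> \<not> ?b s'"
  proof (rule whileP_rule[where f = "\<lambda>(z, P, t). rk z"])
    show "?J (y, [], t)" by simp
  next
    fix s assume J: "?J s" and b: "?b s"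
    obtain z P t2 where s: "s = (z, P, t2)" by (cases s)
    from b s obtain e where pz: "par z = Some e" by auto
    have h: "e \<in> set H" "rk (etl e) < rk z" using rk2[rule_format, OF pz] by blast+
    show "\<exists>s'. ?c s = Some s' \<and> ?J s' \<and> (\<lambda>(z, P, t). rk z) s' < (\<lambda>(z, P, t). rk z) s"
      using J s pz h by auto
  qed
  then obtain z P t2 where w2: "whileP ?b ?c (y, [], t) = Some (z, P, t2)" and J: "?J (z, P, t2)"
    and stop: "\<not> ?b (z, P, t2)" by auto
  have mf: "maxflow n H x y = Some (dst y \<noteq> MInfty, P, t2 + 1)"
    unfolding maxflow_def using w1 w2 by simp
  have lp: "length P \<le> n" using J rk1 yn by auto
  have tb: "t2 + 1 \<le> (hc n + 5) * (length H + n + 1)"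
  proof -
    have "t2 + 1 \<le> C0 + n + 1" using J lp cost by simp
    also have "\<dots> \<le> (hc n + 5) * (length H + n + 1)" unfolding C0_def by (simp add: algebra_simps)
    finally show ?thesis .
  qed
  have rP: "dst y \<noteq> MInfty \<longrightarrow> P \<noteq> []"
  proof
    assume d: "dst y \<noteq> MInfty"
    show "P \<noteq> []"
    proof
      assume "P = []"
      then have "z = y" using J by simp
      then have "par y = None" using stop xy by (simp del: not_None_eq)
      then show False using dnone xy d by auto
    qed
  qed
  have "(x, y) \<in> (rel H)\<^sup>* \<longrightarrow> dst y \<noteq> MInfty"
  proof
    assume "(x, y) \<in> (rel H)\<^sup>*"
    then show "dst y \<noteq> MInfty"
    proof (induction rule: rtrancl_induct)
      case base then show ?case using dx by simp
    next
      case (step b c)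
      then obtain e where "e \<in> set H" "b = etl e" "c = ehd e" by (auto simp: rel_def)
      then show ?case using reach step.IH by auto
    qed
  qed
  then show ?thesis using mf tb J lp rP by auto
qed

section \<open>DELETE\_CYCLE\<close>

lemma sum_list_bound: "(\<forall>P\<in>set S. f P \<le> (k::nat)) \<Longrightarrow> sum_list (map f S) \<le> length S * k"
  by (induction S) auto

lemma del_cycle_ok:
  assumes E: "\<forall>f\<in>set G. etl f < n \<and> ehd f < n \<and> etl f \<noteq> ehd f"
  and eG: "e \<in> set G" and reach: "(ehd e, etl e) \<in> (rel G)\<^sup>*"
  shows "\<exists>G2 t. del_cycle n G e = Some (G2, t) \<and> t \<le> (hc n + 14) * (length G + 1) * (length G + n + 1) \<and>
     length G2 < length G \<and> (\<forall>f\<in>set G2. \<exists>g\<in>set G. eid f = eid g \<and> etl f = etl g \<and> ehd f = ehd g) \<and>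
     (distinct (map eid G) \<longrightarrow> distinct (map eid G2))"
proof -
  define V where "V = length G + n + 1"
  define Kc where "Kc = (hc n + 6) * V"
  have xy: "ehd e \<noteq> etl e" and yn: "etl e < n" using E eG by auto
  let ?K = "\<lambda>(H, S, fin, t). set H \<subseteq> set G \<and> (\<forall>P\<in>set S. set P \<subseteq> set G \<and> length P \<le> n) \<and>
      length S + length H \<le> length G \<and> (S = [] \<longrightarrow> H = G \<and> \<not> fin) \<and>
      t \<le> length G + 1 + (length S + (if fin then 1 else 0)) * Kc"
  let ?b = "\<lambda>(H, S, fin, t). \<not> fin"
  let ?c = "\<lambda>(H, S, fin, t). do {
            (r, P, tm) \<leftarrow> maxflow n H (ehd e) (etl e);
            if r then
              (let mx = Max (evl ` set P) in
               Some (filter (\<lambda>f. evl f < mx) H, S @ [P], False, t + tm + length H + length P + 1))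
            else Some (H, S, True, t + tm) }"
  have "\<exists>s'. whileP ?b ?c (G, [], False, length G + 1) = Some s' \<and> ?K s' \<and> \<not> ?b s'"
  proof (rule whileP_rule[where f = "\<lambda>(H, S, fin, t). 2 * length H + (if fin then 0 else 1)"])
    show "?K (G, [], False, length G + 1)" by simp
  next
    fix s assume K: "?K s" and b: "?b s"
    obtain H S fin t where s: "s = (H, S, fin, t)" by (cases s)
    have fin: "\<not> fin" using b s by simp
    have HG: "set H \<subseteq> set G" using K s by simp
    have EH: "\<forall>f\<in>set H. etl f < n \<and> ehd f < n" using E HG by auto
    obtain r P tm where mf: "maxflow n H (ehd e) (etl e) = Some (r, P, tm)"
      and tm: "tm \<le> (hc n + 5) * (length H + n + 1)" and PH: "set P \<subseteq> set H" and lP: "length P \<le> n"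
      and rP: "r \<longrightarrow> P \<noteq> []" and rr: "(ehd e, etl e) \<in> (rel H)\<^sup>* \<longrightarrow> r"
      using maxflow_ok[OF EH yn xy] by blast
    have lH: "length H \<le> length G" using K s by simp
    have tmV: "tm \<le> (hc n + 5) * V"
    proof -
      have "length H + n + 1 \<le> V" using lH by (simp add: V_def)
      then show ?thesis using tm by (meson le_trans mult_le_mono2)
    qed
    show "\<exists>s'. ?c s = Some s' \<and> ?K s' \<and>
       (\<lambda>(H, S, fin, t). 2 * length H + (if fin then 0 else 1)) s' < (\<lambda>(H, S, fin, t). 2 * length H + (if fin then 0 else 1)) s"
    proof (cases r)
      case True
      define mx where "mx = Max (evl ` set P)"
      have Pne: "P \<noteq> []" using rP True by simp
      have "mx \<in> evl ` set P" unfolding mx_def using Pne by (intro Max_in) auto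
      then obtain f where f: "f \<in> set P" "evl f = mx" by auto
      have "length (filter (\<lambda>f. evl f < mx) H) < length H"
        using f PH by (intro length_filter_less) auto
      moreover have "?c s = Some (filter (\<lambda>f. evl f < mx) H, S @ [P], False, t + tm + length H + length P + 1)"
        using s mf True by (simp add: mx_def Let_def)
      moreover have "t + tm + length H + length P + 1 \<le> length G + 1 + (length (S @ [P]) + 0) * Kc"
      proof -
        have "t \<le> length G + 1 + length S * Kc" using K s fin by simp
        moreover have "length H + length P + 1 \<le> V" using lH lP by (simp add: V_def)
        ultimately have "t + tm + length H + length P + 1 \<le> length G + 1 + length S * Kc + (hc n + 5) * V + V"
          using tmV by linarith
        also have "\<dots> = length G + 1 + (length (S @ [P]) + 0) * Kc" by (simp add: Kc_def algebra_simps)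
        finally show ?thesis .
      qed
      ultimately show ?thesis using K s PH lP by auto
    next
      case False
      have Sne: "S \<noteq> []"
      proof
        assume "S = []"
        then have "H = G" using K s by simp
        then show False using rr reach False by simp
      qed
      have "?c s = Some (H, S, True, t + tm)" using s mf False by simp
      moreover have "t + tm \<le> length G + 1 + (length S + 1) * Kc"
      proof -
        have "t \<le> length G + 1 + length S * Kc" using K s fin by simp
        moreover have "tm \<le> Kc"
        proof -
          have "(hc n + 5) * V \<le> (hc n + 6) * V" by simp
          then show ?thesis using tmV unfolding Kc_def by linarith
        qed
        ultimately show ?thesis by (simp add: algebra_simps)
      qed
      ultimately show ?thesis using K s Sne fin by auto
    qed
  qed
  then obtain s' where w0: "whileP ?b ?c (G, [], False, length G + 1) = Some s'" and K0: "?K s'" and b0: "\<not> ?b s'"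
    by blast
  obtain H S fin t where s': "s' = (H, S, fin, t)" by (cases s')
  have w: "whileP ?b ?c (G, [], False, length G + 1) = Some (H, S, fin, t)" using w0 s' by simp
  have K: "?K (H, S, fin, t)" using K0 s' by simp
  have fin: "fin" using b0 s' by simp
  have Sne: "S \<noteq> []" using K fin by auto
  have lS: "length S \<le> length G" using K by simp
  have SG: "\<forall>P\<in>set S. set P \<subseteq> set G \<and> length P \<le> n" using K by simp
  have tK: "t \<le> length G + 1 + (length S + 1) * Kc" using K fin by simp
  define phi where "phi = (\<lambda>P. Max (evl ` set (e # P)) - Min (evl ` set (e # P)))"
  define Pm where "Pm = (SOME P. P \<in> set S \<and> (\<forall>Q\<in>set S. phi P \<le> phi Q))"
  define C where "C = e # Pm"
  define c where "c = Min (evl ` set C)"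
  define ids where "ids = eid ` set C"
  define G1 where "G1 = map (\<lambda>f. if eid f \<in> ids then (eid f, etl f, ehd f, evl f - c) else f) G"
  define G2 where "G2 = filter (\<lambda>f. evl f \<noteq> 0) G1"
  define T where "T = t + sum_list (map (\<lambda>P. length P + 2) S) + 2 * length C + 3 * length G + 1"
  have dc: "del_cycle n G e = Some (G2, T)"
    unfolding del_cycle_def w
    apply (simp only: Option.bind_lunit prod.case if_not_P[OF Sne])
    apply (simp only: Let_def)
    apply (simp only: G2_def G1_def ids_def c_def C_def Pm_def phi_def T_def)
    done
  have "\<exists>P. P \<in> set S \<and> (\<forall>Q\<in>set S. phi P \<le> phi Q)"
  proof -
    have "Min (phi ` set S) \<in> phi ` set S" using Sne by (intro Min_in) auto
    then obtain P where "P \<in> set S" "phi P = Min (phi ` set S)" by auto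
    then show ?thesis by (intro exI[of _ P]) auto
  qed
  then have PmS: "Pm \<in> set S" unfolding Pm_def by (rule someI2_ex) blast
  have CG: "set C \<subseteq> set G" using PmS SG eG by (auto simp: C_def)
  have lC: "length C \<le> n + 1" using PmS SG by (auto simp: C_def)
  have "c \<in> evl ` set C" unfolding c_def by (intro Min_in) (auto simp: C_def)
  then obtain f where f: "f \<in> set C" "evl f = c" by auto
  have "(eid f, etl f, ehd f, evl f - c) \<in> set G1"
    using f CG unfolding G1_def ids_def by force
  moreover have "\<not> evl (eid f, etl f, ehd f, evl f - c) \<noteq> 0" using f by (simp add: evl_def)
  ultimately have "length G2 < length G1" unfolding G2_def by (rule length_filter_less)
  then have len: "length G2 < length G" by (simp add: G1_def)
  have G1p: "\<forall>f\<in>set G1. \<exists>g\<in>set G. eid f = eid g \<and> etl f = etl g \<and> ehd f = ehd g"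
    unfolding G1_def by (auto simp: eid_def etl_def ehd_def) force
  have "map eid G1 = map eid G" unfolding G1_def by (simp add: eid_def)
  then have dist: "distinct (map eid G) \<longrightarrow> distinct (map eid G2)"
    unfolding G2_def by (metis distinct_map_filter)
  have sumS: "sum_list (map (\<lambda>P. length P + 2) S) \<le> length G * (n + 2)"
  proof -
    have "sum_list (map (\<lambda>P. length P + 2) S) \<le> length S * (n + 2)"
      using SG by (intro sum_list_bound) auto
    also have "\<dots> \<le> length G * (n + 2)" using lS by (rule mult_le_mono1)
    finally show ?thesis .
  qed
  have Tb: "T \<le> (hc n + 14) * (length G + 1) * (length G + n + 1)"
  proof -
    have "(length S + 1) * Kc \<le> (length G + 1) * Kc" using lS by simp
    then have h1: "t \<le> length G + 1 + (length G + 1) * Kc" using tK by linarith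
    have h2: "2 * length C \<le> 2 * (n + 1)" using lC by simp
    have "T \<le> length G + 1 + (length G + 1) * Kc + length G * (n + 2) + 2 * (n + 1) + 3 * length G + 1"
      unfolding T_def using add_mono[OF add_mono[OF h1 sumS] h2] by simp
    also have "\<dots> \<le> (hc n + 14) * (length G + 1) * (length G + n + 1)"
      unfolding Kc_def V_def by (simp add: algebra_simps)
    finally show ?thesis .
  qed
  show ?thesis using dc Tb len G1p dist unfolding G2_def by auto
qed

section \<open>Weighted Cycle Deletion\<close>

definition EI :: "nat \<Rightarrow> edge list \<Rightarrow> bool" where
  "EI n G = (\<forall>f\<in>set G. etl f < n \<and> ehd f < n \<and> etl f \<noteq> ehd f)"

lemma acyclic_insert_cycle:
  assumes "acyclic R" "\<not> acyclic (insert (a, b) R)"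
  shows "(b, a) \<in> R\<^sup>*"
proof -
  from assms(2) obtain v where "(v, v) \<in> (insert (a, b) R)\<^sup>+" by (auto simp: acyclic_def)
  then have "(v, v) \<in> R\<^sup>+ \<or> ((v, a) \<in> R\<^sup>* \<and> (b, v) \<in> R\<^sup>*)" by (simp add: trancl_insert)
  then show ?thesis using assms(1) by (auto simp: acyclic_def)
qed

lemma distinct_map_eq: "distinct (map g xs) \<Longrightarrow> x \<in> set xs \<Longrightarrow> y \<in> set xs \<Longrightarrow> g x = g y \<Longrightarrow> x = y"
  by (metis distinct_map inj_onD)

lemma rel_filter_split:
  assumes "distinct (map eid G)" "e \<in> set G" "eid e = i"
  shows "rel G = insert (etl e, ehd e) (rel (filter (\<lambda>f. eid f \<noteq> i) G))"
proof -
  have u: "f \<in> set G \<Longrightarrow> eid f = i \<Longrightarrow> f = e" for f using assms distinct_map_eq by metis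
  show ?thesis
  proof (rule set_eqI)
    fix p show "p \<in> rel G \<longleftrightarrow> p \<in> insert (etl e, ehd e) (rel (filter (\<lambda>f. eid f \<noteq> i) G))"
    proof
      assume "p \<in> rel G"
      then obtain f where f: "f \<in> set G" "p = (etl f, ehd f)" by (auto simp: rel_def)
      show "p \<in> insert (etl e, ehd e) (rel (filter (\<lambda>f. eid f \<noteq> i) G))"
      proof (cases "eid f = i")
        case True then show ?thesis using u f by simp
      next
        case False then show ?thesis using f by (auto simp: rel_def)
      qed
    next
      assume "p \<in> insert (etl e, ehd e) (rel (filter (\<lambda>f. eid f \<noteq> i) G))"
      then show "p \<in> rel G" using assms(2) by (auto simp: rel_def)
    qed
  qed
qed

lemma find_someE: "find P xs = Some e \<Longrightarrow> e \<in> set xs \<and> P e"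
  by (induction xs) (auto split: if_splits)

lemma find_exists: "\<exists>x\<in>set xs. P x \<Longrightarrow> \<exists>e. find P xs = Some e"
  by (metis find_None_iff not_Some_eq)

lemma rel_filter_corr:
  assumes "\<forall>f\<in>set G2. \<exists>g\<in>set G. eid f = eid g \<and> etl f = etl g \<and> ehd f = ehd g"
  shows "rel (filter (\<lambda>f. eid f \<noteq> i) G2) \<subseteq> rel (filter (\<lambda>f. eid f \<noteq> i) G)"
proof
  fix p assume "p \<in> rel (filter (\<lambda>f. eid f \<noteq> i) G2)"
  then obtain f where f: "f \<in> set G2" "eid f \<noteq> i" "p = (etl f, ehd f)" by (auto simp: rel_def)
  then obtain g where "g \<in> set G" "eid f = eid g" "etl f = etl g" "ehd f = ehd g" using assms by blast
  then show "p \<in> rel (filter (\<lambda>f. eid f \<noteq> i) G)" using f unfolding rel_def by auto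
qed

lemma wcd_step_ok:
  fixes M n :: nat
  defines "W \<equiv> M + n + 1"
  defines "Ab \<equiv> 5 * W"
  defines "Db \<equiv> (hc n + 14) * (M + 1) * W"
  defines "Eb \<equiv> M + Db + Ab"
  assumes EG: "EI n G" and dG: "distinct (map eid G)" and iG: "\<forall>f\<in>set G. eid f < i"
    and aG: "acyclic (rel G)" and lG: "length G \<le> i" and iM: "Suc i \<le> M"
    and ab: "a < n" "b < n" "a \<noteq> b"
  shows "\<exists>G'' t''. wcd_step n (Some (G, t)) (i, (a, b, x)) = Some (G'', t'') \<and> EI n G'' \<and>
     distinct (map eid G'') \<and> (\<forall>f\<in>set G''. eid f < Suc i) \<and> acyclic (rel G'') \<and> length G'' \<le> Suc i \<and>
     t'' + Eb * length G'' \<le> t + Eb * length G + 1 + Ab + Eb"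
proof -
  define G' where "G' = G @ [(i, a, b, x)]"
  define P0 where "P0 = t + Eb * length G + 1 + Ab + Eb"
  have EG': "EI n G'" using EG ab by (simp add: EI_def G'_def etl_def ehd_def)
  have EG'e: "\<forall>e\<in>set G'. etl e < n \<and> ehd e < n" using EG' by (simp add: EI_def)
  obtain c0 t0 where hc0: "has_cycle n G' = Some (c0, t0)" and t0: "t0 \<le> 2 * length G' + 5 * n + 1"
    and c0: "c0 \<longleftrightarrow> \<not> acyclic (rel G')" using has_cycle_ok[OF EG'e] by blast
  have lG': "length G' = Suc (length G)" by (simp add: G'_def)
  have "length G' \<le> M" using lG' lG iM by simp
  then have t0A: "t0 \<le> Ab" using t0 unfolding Ab_def W_def by simp
  have filt: "filter (\<lambda>f. eid f \<noteq> i) G' = G"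
  proof -
    have "filter (\<lambda>f. eid f \<noteq> i) G = G" using iG by (intro filter_True) auto
    then show ?thesis by (simp add: G'_def eid_def)
  qed
  let ?L = "\<lambda>(G, t, cyc). EI n G \<and> distinct (map eid G) \<and> (\<forall>f\<in>set G. eid f \<le> i) \<and>
     acyclic (rel (filter (\<lambda>f. eid f \<noteq> i) G)) \<and> (cyc \<longleftrightarrow> \<not> acyclic (rel G)) \<and> length G \<le> Suc i \<and>
     t + Eb * length G \<le> P0"
  let ?b = "\<lambda>(G, t, cyc). cyc"
  let ?c = "\<lambda>(G, t, cyc). do {
            e \<leftarrow> find (\<lambda>f. eid f = i) G;
            (G1, t1) \<leftarrow> del_cycle n G e;
            (cyc', t2) \<leftarrow> has_cycle n G1;
            Some (G1, t + length G + t1 + t2, cyc') }"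
  have L0: "?L (G', t + 1 + t0, c0)"
  proof -
    have "distinct (map eid G')" using dG iG by (auto simp: G'_def eid_def)
    moreover have "\<forall>f\<in>set G'. eid f \<le> i" using iG by (auto simp: G'_def eid_def)
    moreover have "t + 1 + t0 + Eb * length G' \<le> P0" using t0A lG' unfolding P0_def by simp
    ultimately show ?thesis using EG' filt aG c0 lG' lG by simp
  qed
  have "\<exists>s'. whileP ?b ?c (G', t + 1 + t0, c0) = Some s' \<and> ?L s' \<and> \<not> ?b s'"
  proof (rule whileP_rule[where f = "\<lambda>(G, t, cyc). length G"])
    show "?L (G', t + 1 + t0, c0)" by (rule L0)
  next
    fix s assume L: "?L s" and bs: "?b s"
    obtain H tH cyc where s: "s = (H, tH, cyc)" by (cases s)
    have EH: "EI n H" and dH: "distinct (map eid H)" and iH: "\<forall>f\<in>set H. eid f \<le> i"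
      and aH: "acyclic (rel (filter (\<lambda>f. eid f \<noteq> i) H))" and cyc: "cyc \<longleftrightarrow> \<not> acyclic (rel H)"
      and lH: "length H \<le> Suc i" and pot: "tH + Eb * length H \<le> P0" using L s by simp_all
    have nac: "\<not> acyclic (rel H)" using cyc bs s by simp
    have "\<exists>f\<in>set H. eid f = i"
    proof (rule ccontr)
      assume "\<not> (\<exists>f\<in>set H. eid f = i)"
      then have "filter (\<lambda>f. eid f \<noteq> i) H = H" by (intro filter_True) auto
      then show False using aH nac by simp
    qed
    then obtain e where fe: "find (\<lambda>f. eid f = i) H = Some e" using find_exists[of H "\<lambda>f. eid f = i"] by blast
    have eH: "e \<in> set H" "eid e = i" using find_someE[OF fe] by auto
    have relH: "rel H = insert (etl e, ehd e) (rel (filter (\<lambda>f. eid f \<noteq> i) H))"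
      using rel_filter_split[OF dH eH] .
    have "(ehd e, etl e) \<in> (rel (filter (\<lambda>f. eid f \<noteq> i) H))\<^sup>*"
      using acyclic_insert_cycle[OF aH, of "etl e" "ehd e"] nac relH by simp
    moreover have "rel (filter (\<lambda>f. eid f \<noteq> i) H) \<subseteq> rel H" by (auto simp: rel_def)
    ultimately have reach: "(ehd e, etl e) \<in> (rel H)\<^sup>*" using rtrancl_mono by (metis subsetD)
    have EH': "\<forall>f\<in>set H. etl f < n \<and> ehd f < n \<and> etl f \<noteq> ehd f" using EH by (simp add: EI_def)
    obtain G1 t1 where dc: "del_cycle n H e = Some (G1, t1)"
      and t1: "t1 \<le> (hc n + 14) * (length H + 1) * (length H + n + 1)"
      and lG1: "length G1 < length H"
      and corr: "\<forall>f\<in>set G1. \<exists>g\<in>set H. eid f = eid g \<and> etl f = etl g \<and> ehd f = ehd g"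
      and dG1: "distinct (map eid H) \<longrightarrow> distinct (map eid G1)"
      using del_cycle_ok[OF EH' eH(1) reach] by blast
    have EG1: "EI n G1" unfolding EI_def
    proof
      fix f assume "f \<in> set G1"
      then obtain g where "g \<in> set H" "etl f = etl g" "ehd f = ehd g" using corr by blast
      then show "etl f < n \<and> ehd f < n \<and> etl f \<noteq> ehd f" using EH by (simp add: EI_def)
    qed
    have EG1e: "\<forall>e\<in>set G1. etl e < n \<and> ehd e < n" using EG1 by (simp add: EI_def)
    obtain cyc' t2 where hc1: "has_cycle n G1 = Some (cyc', t2)" and t2: "t2 \<le> 2 * length G1 + 5 * n + 1"
      and cyc': "cyc' \<longleftrightarrow> \<not> acyclic (rel G1)" using has_cycle_ok[OF EG1e] by blast
    have step: "?c s = Some (G1, tH + length H + t1 + t2, cyc')"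
      using s fe dc hc1 by simp
    have lHM: "length H \<le> M" using lH iM by simp
    have t1D: "t1 \<le> Db"
    proof -
      have "(hc n + 14) * (length H + 1) * (length H + n + 1) \<le> (hc n + 14) * (M + 1) * W"
        unfolding W_def using lHM by (intro mult_le_mono mult_le_mono2) auto
      then show ?thesis using t1 unfolding Db_def by linarith
    qed
    have "length G1 \<le> M" using lG1 lHM by simp
    then have t2A: "t2 \<le> Ab" using t2 unfolding Ab_def W_def by simp
    have "tH + length H + t1 + t2 + Eb * length G1 \<le> tH + Eb + Eb * length G1"
      using t1D t2A lHM unfolding Eb_def by linarith
    also have "\<dots> \<le> tH + Eb * length H"
    proof -
      have "Suc (length G1) \<le> length H" using lG1 by simp
      then have "Eb * Suc (length G1) \<le> Eb * length H" by (rule mult_le_mono2)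
      then show ?thesis by simp
    qed
    finally have pot': "tH + length H + t1 + t2 + Eb * length G1 \<le> P0" using pot by linarith
    have iG1: "\<forall>f\<in>set G1. eid f \<le> i"
    proof
      fix f assume "f \<in> set G1"
      then obtain g where "g \<in> set H" "eid f = eid g" using corr by blast
      then show "eid f \<le> i" using iH by simp
    qed
    have aG1: "acyclic (rel (filter (\<lambda>f. eid f \<noteq> i) G1))"
      using acyclic_subset[OF aH rel_filter_corr[OF corr]] .
    have "?L (G1, tH + length H + t1 + t2, cyc')"
      using EG1 dG1 dH iG1 aG1 cyc' lG1 lH pot' by simp
    then show "\<exists>s'. ?c s = Some s' \<and> ?L s' \<and> (\<lambda>(G, t, cyc). length G) s' < (\<lambda>(G, t, cyc). length G) s"
      using step lG1 s by simp
  qed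
  then obtain s' where w0: "whileP ?b ?c (G', t + 1 + t0, c0) = Some s'" and L: "?L s'" and b0: "\<not> ?b s'"
    by blast
  obtain G'' t'' cyc where s': "s' = (G'', t'', cyc)" by (cases s')
  have w: "whileP ?b ?c (G', t + 1 + t0, c0) = Some (G'', t'', cyc)" using w0 s' by simp
  have res: "wcd_step n (Some (G, t)) (i, (a, b, x)) = Some (G'', t'')"
    unfolding wcd_step_def
    apply (simp only: prod.case Option.bind_lunit Let_def)
    apply (simp only: G'_def[symmetric] hc0 Option.bind_lunit prod.case)
    apply (simp only: w Option.bind_lunit prod.case)
    done
  have "EI n G''" "distinct (map eid G'')" "\<forall>f\<in>set G''. eid f \<le> i" "acyclic (rel G'')"
    "length G'' \<le> Suc i" "t'' + Eb * length G'' \<le> P0"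
    using L b0 s' by simp_all
  then show ?thesis using res unfolding P0_def by (auto simp: less_Suc_eq_le)
qed

lemma wcd_fold:
  fixes M n :: nat
  defines "W \<equiv> M + n + 1"
  defines "Ab \<equiv> 5 * W"
  defines "Db \<equiv> (hc n + 14) * (M + 1) * W"
  defines "Eb \<equiv> M + Db + Ab"
  shows "EI n G \<Longrightarrow> distinct (map eid G) \<Longrightarrow> \<forall>f\<in>set G. eid f < k \<Longrightarrow> acyclic (rel G) \<Longrightarrow>
    length G \<le> k \<Longrightarrow> t + Eb * length G \<le> 1 + k * (1 + Ab + Eb) \<Longrightarrow>
    map fst ys = [k..<k + length ys] \<Longrightarrow> k + length ys \<le> M \<Longrightarrow>
    \<forall>y\<in>set ys. fst (snd y) < n \<and> fst (snd (snd y)) < n \<and> fst (snd y) \<noteq> fst (snd (snd y)) \<Longrightarrow>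
    \<exists>G' t'. foldl (wcd_step n) (Some (G, t)) ys = Some (G', t') \<and> t' \<le> 1 + (k + length ys) * (1 + Ab + Eb)"
proof (induction ys arbitrary: k G t)
  case Nil
  then show ?case by simp
next
  case (Cons y ys)
  obtain i a b x where y: "y = (i, (a, b, x))" by (cases y) auto
  have ik: "i = k" using Cons.prems(7) y by (simp add: upt_conv_Cons del: upt_Suc)
  have ab: "a < n" "b < n" "a \<noteq> b" using Cons.prems(9) y by auto
  have iM: "Suc i \<le> M" using Cons.prems(8) ik by simp
  obtain G'' t'' where st: "wcd_step n (Some (G, t)) (i, (a, b, x)) = Some (G'', t'')"
    and E'': "EI n G''" and d'': "distinct (map eid G'')" and i'': "\<forall>f\<in>set G''. eid f < Suc i"
    and a'': "acyclic (rel G'')" and l'': "length G'' \<le> Suc i"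
    and p'': "t'' + Eb * length G'' \<le> t + Eb * length G + 1 + Ab + Eb"
  proof -
    have pre: "\<forall>f\<in>set G. eid f < i" "length G \<le> i" using Cons.prems(3,5) ik by auto
    show ?thesis
      using wcd_step_ok[where M=M and n=n and G=G and i=i and t=t and a=a and b=b and x=x,
          OF Cons.prems(1,2) pre(1) Cons.prems(4) pre(2) iM ab] that
      unfolding Eb_def Db_def Ab_def W_def by blast
  qed
  have p2: "t'' + Eb * length G'' \<le> 1 + Suc k * (1 + Ab + Eb)"
    using p'' Cons.prems(6) by simp
  have mf: "map fst ys = [Suc k..<Suc k + length ys]" using Cons.prems(7) by (simp add: upt_conv_Cons del: upt_Suc)
  obtain G' t' where "foldl (wcd_step n) (Some (G'', t'')) ys = Some (G', t')"
    and "t' \<le> 1 + (Suc k + length ys) * (1 + Ab + Eb)"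
    using Cons.IH[of G'' "Suc k" t''] E'' d'' i'' a'' l'' p2 mf Cons.prems(8,9) ik by auto
  then show ?case using st y ik by simp
qed

lemma hc_bound:
  assumes "n \<ge> 2"
  shows "real (hc n) \<le> 4 * log 2 (real n)" and "1 \<le> log 2 (real n)"
proof -
  have L1: "1 \<le> log 2 (real n)" using assms by (simp add: le_log_iff)
  have "0 \<le> log 2 (real n + 1)" using assms by simp
  then have "-1 < log 2 (real n + 1)" by linarith
  then have c0: "0 \<le> \<lceil>log 2 (real n + 1)\<rceil>" by simp
  have "real (hc n) = real_of_int \<lceil>log 2 (real n + 1)\<rceil> + 1"
    unfolding hc_def using c0 by simp
  also have "\<dots> \<le> log 2 (real n + 1) + 2" using of_int_ceiling_le_add_one[of "log 2 (real n + 1)"] by linarith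
  also have "log 2 (real n + 1) \<le> log 2 (2 * real n)" using assms by simp
  also have "log 2 (2 * real n) = 1 + log 2 (real n)" using assms by (simp add: log_mult)
  finally show "real (hc n) \<le> 4 * log 2 (real n)" using L1 by simp
  show "1 \<le> log 2 (real n)" by (rule L1)
qed

theorem theorem3p6:
  "\<exists>c::real. c > 0 \<and> (\<forall>n es. valid_input n es \<longrightarrow>
     (\<exists>G t. wcd n es = Some (G, t) \<and>
        real t \<le> c * (real (length es + n) * real (length es) ^ 2 * log 2 (real n)) + c))"
proof (intro exI[of _ 200] conjI allI impI)
  show "(0::real) < 200" by simp
next
  fix n es assume v: "valid_input n es"
  define M where "M = length es"
  define W where "W = M + n + 1"
  define Ab where "Ab = 5 * W"
  define Db where "Db = (hc n + 14) * (M + 1) * W"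
  define Eb where "Eb = M + Db + Ab"
  define ys where "ys = zip [0..<M] es"
  have lys: "length ys = M" by (simp add: ys_def M_def)
  have mfs: "map fst ys = [0..<0 + length ys]" using lys by (simp add: ys_def M_def)
  have vys: "\<forall>y\<in>set ys. fst (snd y) < n \<and> fst (snd (snd y)) < n \<and> fst (snd y) \<noteq> fst (snd (snd y))"
  proof
    fix y assume "y \<in> set ys"
    then have "snd y \<in> set es" unfolding ys_def by (metis set_zip_rightD surjective_pairing)
    then show "fst (snd y) < n \<and> fst (snd (snd y)) < n \<and> fst (snd y) \<noteq> fst (snd (snd y))"
      using v unfolding valid_input_def by (cases "snd y") auto
  qed
  have ex: "\<exists>G' t'. foldl (wcd_step n) (Some ([], 1)) ys = Some (G', t') \<and> t' \<le> 1 + (0 + length ys) * (1 + Ab + Eb)"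
    unfolding Eb_def Db_def Ab_def W_def
    by (rule wcd_fold[where M=M and n=n and G="[]" and k=0 and t=1 and ys=ys])
      (use mfs vys lys in \<open>auto simp: EI_def rel_def acyclic_def\<close>)
  then obtain G t where fo: "foldl (wcd_step n) (Some ([], 1)) ys = Some (G, t)"
    and tb: "t \<le> 1 + (0 + length ys) * (1 + Ab + Eb)" by blast
  have wc: "wcd n es = Some (G, t)" using fo by (simp add: wcd_def ys_def M_def)
  have nat_b: "1 + Ab + Eb \<le> (hc n + 25) * (M + 1) * W"
  proof -
    have "1 + M \<le> W" by (simp add: W_def)
    moreover have "W \<le> (M + 1) * W" by simp
    ultimately have "1 + M + 10 * W \<le> 11 * ((M + 1) * W)" by linarith
    then show ?thesis unfolding Eb_def Db_def Ab_def by (simp add: algebra_simps)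
  qed
  have "M * (1 + Ab + Eb) \<le> M * ((hc n + 25) * (M + 1) * W)" by (rule mult_le_mono2[OF nat_b])
  then have tb2: "t \<le> 1 + M * ((hc n + 25) * (M + 1) * W)"
    using tb lys by simp
  show "\<exists>G t. wcd n es = Some (G, t) \<and>
        real t \<le> 200 * (real (length es + n) * real (length es) ^ 2 * log 2 (real n)) + 200"
  proof (intro exI conjI)
    show "wcd n es = Some (G, t)" by (rule wc)
    show "real t \<le> 200 * (real (length es + n) * real (length es) ^ 2 * log 2 (real n)) + 200"
    proof (cases "M = 0")
      case True
      then show ?thesis using tb2 by (simp add: M_def)
    next
      case False
      then have "es \<noteq> []" by (simp add: M_def)
      then obtain y where y: "y \<in> set es" by (cases es) auto
      obtain a b x where yabx: "y = (a, b, x)" by (cases y)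
      have "a < n \<and> b < n \<and> a \<noteq> b" using v y yabx unfolding valid_input_def by fastforce
      then have n2: "n \<ge> 2" by linarith
      define L where "L = log 2 (real n)"
      have hL: "real (hc n) \<le> 4 * L" and L1: "1 \<le> L" using hc_bound[OF n2] by (auto simp: L_def)
      have "real t \<le> real (1 + M * ((hc n + 25) * (M + 1) * W))" using tb2 by (rule of_nat_mono)
      also have "real (1 + M * ((hc n + 25) * (M + 1) * W)) = 1 + real M * (real (hc n) + 25) * (real M + 1) * (real M + real n + 1)"
        by (simp add: W_def algebra_simps)
      finally have rt: "real t \<le> 1 + real M * (real (hc n) + 25) * (real M + 1) * (real M + real n + 1)" .
      have M1: "1 \<le> real M" using False by simp
      have A: "real M * (real (hc n) + 25) \<le> real M * (29 * L)"
        using hL L1 by (intro mult_left_mono) auto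
      have B: "real M * (real (hc n) + 25) * (real M + 1) \<le> real M * (29 * L) * (2 * real M)"
        by (rule mult_mono[OF A]) (use M1 L1 in auto)
      have C: "real M * (real (hc n) + 25) * (real M + 1) * (real M + real n + 1) \<le>
          real M * (29 * L) * (2 * real M) * (2 * (real M + real n))"
        by (rule mult_mono[OF B]) (use M1 L1 in auto)
      have D: "real M * (29 * L) * (2 * real M) * (2 * (real M + real n)) =
          116 * (real (M + n) * real M ^ 2 * L)" by (simp add: power2_eq_square algebra_simps)
      have E: "0 \<le> real (M + n) * real M ^ 2 * L" using L1 by simp
      have "real t \<le> 1 + 116 * (real (M + n) * real M ^ 2 * L)" using rt C D by linarith
      then have "real t \<le> 200 * (real (M + n) * real M ^ 2 * L) + 200" using E by linarith
      then show ?thesis by (simp only: M_def L_def)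
    qed
  qed
qed
end
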